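(* Let $\Lambda\subseteq\Delta$ be a non-empty closed convex set. Assume there is $L\ge0$ such that for every $g\in\mathcal G_1$ the map $\lambda\mapsto D_{KL}(\hat{\mathsf p}_\lambda\,\|\,\pi_g)$ is finite-valued and $L$-Lipschitz on $\Delta$ with respect to $\|\cdot\|_1$. Let $V^*_\Delta=\inf_{g\in\mathcal G_1}\max_{\lambda\in\Delta}D_{KL}(\hat{\mathsf p}_\lambda\|\pi_g)$ and $V^*_\Lambda=\inf_{g\in\mathcal G_1}\max_{\lambda\in\Lambda}D_{KL}(\hat{\mathsf p}_\lambda\|\pi_g)$. Then $$0\le V^*_\Delta-V^*_\Lambda\le L\cdot d_H(\Lambda,\Delta),\qquad d_H(\Lambda,\Delta)=\max_{\lambda\in\Delta}\min_{\lambda'\in\Lambda}\|\lambda-\lambda'\|_1 .$$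
   Context: Fix an integer $p\ge 1$, $[1,p]=\{1,\dots,p\}$, $\Delta=\{\lambda\in\mathbb R^p:\lambda_k\ge 0,\ \sum_k\lambda_k=1\}$. Let $\hat{\mathsf p}_1,\dots,\hat{\mathsf p}_p$ be probability distributions with finite supports, $\mathcal X_0=\bigcup_k\mathrm{supp}(\hat{\mathsf p}_k)$, and $\hat\pi_1,\dots,\hat\pi_p$ probability distributions on $\mathcal X_0$. A gate is $g:\mathcal X_0\times[1,p]\to[0,1]$ with $\sum_kg(x,k)=1$ for each $x$; $\pi_g(x)=\sum_kg(x,k)\hat\pi_k(x)$, $Z_g=\sum_{x\in\mathcal X_0}\pi_g(x)$, $\mathcal G_1=\{g:Z_g=1\}$. For $\lambda\in\Delta$, $\hat{\mathsf p}_\lambda=\sum_k\lambda_k\hat{\mathsf p}_k$. $D_{KL}(P\|Q)=\sum_xP(x)\log\frac{P(x)}{Q(x)}\in[0,\infty]$ with conventions $0\log\frac0q=0$, $a\log\frac a0=+\infty$ for $a>0$. *)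

theory Defs
  imports "HOL-Analysis.Analysis" "HOL-Probability.Probability_Mass_Function"
begin

text \<open>Index set [1,p] is modelled by a finite type 'n (p = CARD('n) \<ge> 1);
  weight vectors lambda are elements of real^'n.\<close>

definition prob_simplex :: "(real^'n) set" where
  "prob_simplex = {l. (\<forall>k. 0 \<le> l $ k) \<and> (\<Sum>k\<in>UNIV. l $ k) = 1}"

definition l1dist :: "real^'n \<Rightarrow> real^'n \<Rightarrow> real" where
  "l1dist l l' = (\<Sum>k\<in>UNIV. \<bar>l $ k - l' $ k\<bar>)"

text \<open>Kullback-Leibler divergence of P from Q, summed over a finite set X
  (containing the support of P); conventions 0 log(0/q) = 0, a log(a/0) = +infinity.\<close>

definition KL :: "'a set \<Rightarrow> ('a \<Rightarrow> real) \<Rightarrow> ('a \<Rightarrow> real) \<Rightarrow> ereal" where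
  "KL X P Q = (\<Sum>x\<in>X. if P x = 0 then 0
                        else if Q x = 0 then \<infinity>
                        else ereal (P x * ln (P x / Q x)))"

definition X0 :: "('n \<Rightarrow> 'a pmf) \<Rightarrow> 'a set" where
  "X0 P = (\<Union>k. set_pmf (P k))"

definition mixture :: "('n \<Rightarrow> 'a pmf) \<Rightarrow> real^'n \<Rightarrow> 'a \<Rightarrow> real" where
  "mixture P l x = (\<Sum>k\<in>UNIV. l $ k * pmf (P k) x)"

definition is_gate :: "'a set \<Rightarrow> ('a \<Rightarrow> 'n \<Rightarrow> real) \<Rightarrow> bool" where
  "is_gate X g \<longleftrightarrow> (\<forall>x\<in>X. (\<forall>k. 0 \<le> g x k \<and> g x k \<le> 1) \<and> (\<Sum>k\<in>UNIV. g x k) = 1)"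

definition pi_gate :: "('n \<Rightarrow> 'a pmf) \<Rightarrow> ('a \<Rightarrow> 'n \<Rightarrow> real) \<Rightarrow> 'a \<Rightarrow> real" where
  "pi_gate Pih g x = (\<Sum>k\<in>UNIV. g x k * pmf (Pih k) x)"

definition Zg :: "'a set \<Rightarrow> ('n \<Rightarrow> 'a pmf) \<Rightarrow> ('a \<Rightarrow> 'n \<Rightarrow> real) \<Rightarrow> real" where
  "Zg X Pih g = (\<Sum>x\<in>X. pi_gate Pih g x)"

definition G1 :: "'a set \<Rightarrow> ('n \<Rightarrow> 'a pmf) \<Rightarrow> ('a \<Rightarrow> 'n \<Rightarrow> real) set" where
  "G1 X Pih = {g. is_gate X g \<and> Zg X Pih g = 1}"

definition minimax_value ::
  "('n \<Rightarrow> 'a pmf) \<Rightarrow> ('n \<Rightarrow> 'a pmf) \<Rightarrow> (real^'n) set \<Rightarrow> ereal" where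
  "minimax_value P Pih S =
     (INF g\<in>G1 (X0 P) Pih. SUP l\<in>S. KL (X0 P) (mixture P l) (pi_gate Pih g))"

definition hausdorff_l1 :: "(real^'n) set \<Rightarrow> (real^'n) set \<Rightarrow> real" where
  "hausdorff_l1 A B = (SUP l\<in>B. INF l'\<in>A. l1dist l l')"

end

theory Submission
  imports Defs
begin

lemma KL_lower:
  assumes "finite X" "\<And>x. x \<in> X \<Longrightarrow> P x \<ge> 0" "\<And>x. x \<in> X \<Longrightarrow> Q x \<ge> 0"
    "(\<Sum>x\<in>X. Q x) = 1"
  shows "KL X P Q \<ge> -1"
proof -
  have "(\<Sum>x\<in>X. ereal (- Q x)) \<le> KL X P Q"
    unfolding KL_def
  proof (rule sum_mono)
    fix x assume x: "x \<in> X"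
    show "ereal (- Q x) \<le> (if P x = 0 then 0 else if Q x = 0 then \<infinity> else ereal (P x * ln (P x / Q x)))"
    proof (cases "P x = 0")
      case True then show ?thesis using assms(3)[OF x] by simp
    next
      case False
      show ?thesis
      proof (cases "Q x = 0")
        case True then show ?thesis using False by simp
      next
        case Q: False
        have p: "P x > 0" using assms(2)[OF x] False by simp
        have q: "Q x > 0" using assms(3)[OF x] Q by simp
        have "ln (Q x / P x) \<le> Q x / P x - 1" using p q by (intro ln_le_minus_one) auto
        hence "P x * ln (Q x / P x) \<le> P x * (Q x / P x - 1)" using p by (intro mult_left_mono) auto
        also have "\<dots> = Q x - P x" using p by (simp add: field_simps)
        moreover have "P x * ln (P x / Q x) = - (P x * ln (Q x / P x))"
          using p q by (simp add: ln_div algebra_simps)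
        ultimately have "P x * ln (P x / Q x) \<ge> - Q x"
          using p by linarith
        then show ?thesis using False Q by simp
      qed
    qed
  qed
  also have "(\<Sum>x\<in>X. ereal (- Q x)) = ereal (- 1)"
    by (simp add: sum_ereal sum_negf assms(4))
  finally show ?thesis by (metis uminus_ereal.simps(1) one_ereal_def)
qed

lemma l1dist_le2:
  assumes "l \<in> prob_simplex" "l' \<in> prob_simplex"
  shows "l1dist l l' \<le> 2" "0 \<le> l1dist l l'"
proof -
  have "l1dist l l' \<le> (\<Sum>k\<in>UNIV. l $ k + l' $ k)"
    unfolding l1dist_def using assms
    by (intro sum_mono) (auto simp: prob_simplex_def abs_le_iff)
  also have "\<dots> = 2" using assms by (simp add: sum.distrib prob_simplex_def)
  finally show "l1dist l l' \<le> 2" .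
  show "0 \<le> l1dist l l'" unfolding l1dist_def by (simp add: sum_nonneg)
qed

theorem mainTheorem7:
  fixes P Pih :: "'n::finite \<Rightarrow> 'a pmf"
    and \<Lambda> :: "(real^'n) set"
    and L :: real
  assumes fin: "\<And>k. finite (set_pmf (P k))"
    and Pi_on: "\<And>k. set_pmf (Pih k) \<subseteq> X0 P"
    and sub: "\<Lambda> \<subseteq> prob_simplex" and ne: "\<Lambda> \<noteq> {}"
    and cl: "closed \<Lambda>" and cv: "convex \<Lambda>"
    and L: "L \<ge> 0"
    and finite_val: "\<And>g l. g \<in> G1 (X0 P) Pih \<Longrightarrow> l \<in> prob_simplex \<Longrightarrow>
        KL (X0 P) (mixture P l) (pi_gate Pih g) < \<infinity>"
    and lip: "\<And>g l l'. g \<in> G1 (X0 P) Pih \<Longrightarrow> l \<in> prob_simplex \<Longrightarrow> l' \<in> prob_simplex \<Longrightarrow>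
        \<bar>real_of_ereal (KL (X0 P) (mixture P l) (pi_gate Pih g))
         - real_of_ereal (KL (X0 P) (mixture P l') (pi_gate Pih g))\<bar> \<le> L * l1dist l l'"
  shows "0 \<le> minimax_value P Pih prob_simplex - minimax_value P Pih \<Lambda>
    \<and> minimax_value P Pih prob_simplex - minimax_value P Pih \<Lambda> \<le> ereal (L * hausdorff_l1 \<Lambda> prob_simplex)"
proof -
  define G where "G = G1 (X0 P) Pih"
  define K where "K g l = KL (X0 P) (mixture P l) (pi_gate Pih g)" for g l
  define f where "f g l = real_of_ereal (K g l)" for g l
  define D where "D = (prob_simplex :: (real^'n) set)"
  define h where "h = hausdorff_l1 \<Lambda> D"
  have finX: "finite (X0 P)" unfolding X0_def using fin by auto
  obtain l0 where l0: "l0 \<in> \<Lambda>" using ne by auto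
  have l0D: "l0 \<in> D" using l0 sub D_def by auto
  define g0 :: "'a \<Rightarrow> 'n \<Rightarrow> real" where "g0 = (\<lambda>x k. 1 / real CARD('n))"
  have g0G: "g0 \<in> G"
  proof -
    have "is_gate (X0 P) g0" unfolding is_gate_def g0_def by auto
    moreover have "Zg (X0 P) Pih g0 = 1"
    proof -
      have "Zg (X0 P) Pih g0 = (\<Sum>k\<in>UNIV. (1 / real CARD('n)) * (\<Sum>x\<in>X0 P. pmf (Pih k) x))"
        unfolding Zg_def pi_gate_def g0_def by (subst sum.swap) (simp add: sum_distrib_left)
      also have "\<dots> = 1" using sum_pmf_eq_1[OF finX Pi_on] by simp
      finally show ?thesis .
    qed
    ultimately show ?thesis unfolding G_def G1_def by auto
  qed
  have Klow: "K g l \<ge> -1" if "g \<in> G" "l \<in> D" for g l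
    unfolding K_def
  proof (rule KL_lower[OF finX])
    show "0 \<le> mixture P l x" for x using that unfolding mixture_def D_def prob_simplex_def
      by (auto intro!: sum_nonneg)
    show "0 \<le> pi_gate Pih g x" if "x \<in> X0 P" for x using \<open>g \<in> G\<close> that
      unfolding pi_gate_def G_def G1_def is_gate_def by (auto intro!: sum_nonneg)
    show "(\<Sum>x\<in>X0 P. pi_gate Pih g x) = 1" using \<open>g \<in> G\<close> unfolding G_def G1_def Zg_def by auto
  qed
  have Kf: "K g l = ereal (f g l)" if "g \<in> G" "l \<in> D" for g l
  proof -
    have "K g l < \<infinity>" using finite_val that unfolding K_def G_def D_def by auto
    moreover have "K g l \<ge> -1" using Klow that by auto
    ultimately show ?thesis unfolding f_def by (cases "K g l") auto
  qed
  have flow: "f g l \<ge> -1" if "g \<in> G" "l \<in> D" for g l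
  proof -
    have "- 1 \<le> ereal (f g l)" using Klow[OF that] Kf[OF that] by simp
    then show ?thesis by (metis ereal_less_eq(3) uminus_ereal.simps(1) one_ereal_def)
  qed
  have flip: "f g l \<le> f g l' + L * l1dist l l'" if "g \<in> G" "l \<in> D" "l' \<in> D" for g l l'
    using lip[of g l l'] that unfolding f_def K_def G_def D_def by auto
  have fup: "f g l \<le> f g l0 + 2 * L" if "g \<in> G" "l \<in> D" for g l
  proof -
    have "f g l \<le> f g l0 + L * l1dist l l0" using flip that l0D by auto
    also have "L * l1dist l l0 \<le> L * 2" using l1dist_le2[of l l0] that l0D L D_def
      by (intro mult_left_mono) auto
    finally show ?thesis by simp
  qed
  have bddb: "bdd_below ((\<lambda>l'. l1dist l l') ` \<Lambda>)" if "l \<in> D" for l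
    by (rule bdd_belowI[of _ 0], clarify, rule l1dist_le2(2)) (use that sub D_def in auto)
  have infle: "(INF l'\<in>\<Lambda>. l1dist l l') \<le> h" if "l \<in> D" for l
  proof -
    have "bdd_above ((\<lambda>l. INF l'\<in>\<Lambda>. l1dist l l') ` D)"
    proof (rule bdd_aboveI[of _ 2], clarify)
      fix l assume "l \<in> D"
      have "(INF l'\<in>\<Lambda>. l1dist l l') \<le> l1dist l l0" by (rule cINF_lower[OF bddb[OF \<open>l \<in> D\<close>] l0])
      also have "\<dots> \<le> 2" using l1dist_le2 \<open>l \<in> D\<close> l0D D_def by auto
      finally show "(INF l'\<in>\<Lambda>. l1dist l l') \<le> 2" .
    qed
    then show ?thesis unfolding h_def hausdorff_l1_def by (rule cSUP_upper[OF that])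
  qed
  define MD where "MD g = (SUP l\<in>D. K g l)" for g
  define MLam where "MLam g = (SUP l\<in>\<Lambda>. K g l)" for g
  have Aeq: "minimax_value P Pih prob_simplex = (INF g\<in>G. MD g)"
    unfolding minimax_value_def MD_def K_def G_def D_def by simp
  have Beq: "minimax_value P Pih \<Lambda> = (INF g\<in>G. MLam g)"
    unfolding minimax_value_def MLam_def K_def G_def by simp
  have MLamlow: "MLam g \<ge> -1" if "g \<in> G" for g
    unfolding MLam_def using Klow[OF that l0D] l0 by (intro SUP_upper2[OF l0]) auto
  have MLamMD: "MLam g \<le> MD g" for g
    unfolding MLam_def MD_def using sub D_def by (intro SUP_subset_mono) auto
  have MDup: "MD g \<le> ereal (f g l0 + 2 * L)" if "g \<in> G" for g
    unfolding MD_def using Kf[OF that] fup[OF that] by (intro SUP_least) auto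
  have key: "MD g \<le> MLam g + ereal (L * h)" if "g \<in> G" for g
  proof -
    have "MLam g \<le> ereal (f g l0 + 2 * L)" using MLamMD[of g] MDup[OF that] by (rule order.trans)
    then obtain m where m: "MLam g = ereal m" using MLamlow[OF \<open>g \<in> G\<close>] by (cases "MLam g") auto
    have fm: "f g l' \<le> m" if "l' \<in> \<Lambda>" for l'
    proof -
      have "K g l' \<le> MLam g" unfolding MLam_def using that by (rule SUP_upper)
      thus ?thesis using Kf[OF \<open>g \<in> G\<close>] that sub D_def m by auto
    qed
    show ?thesis unfolding MD_def m
    proof (rule SUP_least)
      fix l assume lD: "l \<in> D"
      have "f g l - m \<le> L * (INF l'\<in>\<Lambda>. l1dist l l')"
      proof (rule ccontr)
        assume c: "\<not> ?thesis"
        show False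
        proof (cases "L = 0")
          case True
          have "f g l \<le> f g l0 + L * l1dist l l0" using flip \<open>g \<in> G\<close> lD l0D by auto
          then show False using c True fm[OF l0] by simp
        next
          case False
          hence Lp: "L > 0" using L by simp
          have "(INF l'\<in>\<Lambda>. l1dist l l') < (f g l - m) / L" using c Lp
            by (simp add: field_simps)
          then obtain l' where l': "l' \<in> \<Lambda>" "l1dist l l' < (f g l - m) / L"
            using cINF_less_iff[OF ne bddb[OF lD]] by auto
          have "L * l1dist l l' < f g l - m" using l'(2) Lp by (simp add: field_simps)
          moreover have "f g l \<le> f g l' + L * l1dist l l'" using flip \<open>g \<in> G\<close> lD l' sub D_def by auto
          ultimately show False using fm[OF l'(1)] by simp
        qed
      qed
      also have "L * (INF l'\<in>\<Lambda>. l1dist l l') \<le> L * h" using infle[OF lD] L by (rule mult_left_mono)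
      finally have "f g l \<le> m + L * h" by simp
      then show "K g l \<le> ereal m + ereal (L * h)" using Kf[OF \<open>g \<in> G\<close> lD] by simp
    qed
  qed
  define A where "A = (INF g\<in>G. MD g)"
  define B where "B = (INF g\<in>G. MLam g)"
  have BA: "B \<le> A" unfolding A_def B_def using MLamMD by (intro INF_mono) auto
  have Blow: "-1 \<le> B" unfolding B_def using MLamlow by (intro INF_greatest) auto
  have Aup: "A \<le> ereal (f g0 l0 + 2 * L)" unfolding A_def using MDup[OF g0G]
    by (intro INF_lower2[OF g0G]) auto
  have AB: "A - ereal (L * h) \<le> B" unfolding B_def
  proof (rule INF_greatest)
    fix g assume g: "g \<in> G"
    have "A \<le> MD g" unfolding A_def using g by (rule INF_lower)
    also have "\<dots> \<le> MLam g + ereal (L * h)" using key[OF g] .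
    finally show "A - ereal (L * h) \<le> MLam g" by (simp add: ereal_minus_le_iff) 
  qed
  obtain a where a: "A = ereal a" using Aup BA Blow
    by (cases A) auto
  obtain b where b: "B = ereal b" using Aup BA Blow
    by (cases B) auto
  have "0 \<le> A - B \<and> A - B \<le> ereal (L * h)"
    using BA AB unfolding a b by auto
  then show ?thesis
    unfolding Aeq Beq A_def[symmetric] B_def[symmetric] h_def D_def .
qed

end
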